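(* Let $\mathbb{K}$ be a field, $m\in\mathbb{Z}_{>0}$, $n=m$, and let $\mathbf{U}_1=\mathbf{U}_1(\mathfrak{gl}_m)$. Let $V$ be the $n$-dimensional vector representation of $\mathbf{U}_1$, $V^*$ its dual, and for $r,s\in\mathbb{Z}_{\geq 0}$ set $T_n^{r,s}=V^{\otimes r}\otimes (V^* )^{\otimes s}$. If $T_n^{r,s}$ is a non-semisimple $\mathbf{U}_1$-module, then $T_n^{r+1,s+1}$ is a non-semisimple $\mathbf{U}_1$-module.
   Context: $\mathbf{U}_1(\mathfrak{gl}_m)$ is the (Lusztig) quantized enveloping algebra of $\mathfrak{gl}_m$ specialized at $q=1$ over $\mathbb{K}$ (for any characteristic of $\mathbb{K}$); modules are finite-dimensional of type $1$, and tensor products carry the usual Hopf algebra action. *)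

theory Defs
  imports Main
begin

text \<open>Concrete model of the mixed tensor space T^{r,s} = V^{\<otimes> r} \<otimes> (V^*)^{\<otimes> s}
  as a module over Lusztig's divided-power algebra U_1(gl_m) (specialised at q = 1, type 1).
  Basis vectors are words w of length r+s over {0..<m}: positions p < r are V-factors
  (basis e_(w!p)), positions p \<ge> r are V^*-factors (dual basis e^*_(w!p)).
  Generators: E_i^(k), F_i^(k) (simple roots, Suc i < m), K_j^{\<plusminus>1} (acting as 1 on type 1
  modules at q=1) and the Cartan binomials [K_j;0,t], acting on weight \<lambda> by (\<lambda>_j choose t).\<close>

definition words :: "nat \<Rightarrow> nat \<Rightarrow> nat \<Rightarrow> nat list set" where
  "words m r s = {w. length w = r + s \<and> set w \<subseteq> {..<m}}"

text \<open>Action of E_i (e = True) resp. F_i (e = False) on a single tensor factor at position p: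
  on V: E_i e_(i+1) = e_i, F_i e_i = e_(i+1); on V^* (via the antipode at q=1):
  E_i e^*_i = - e^*_(i+1), F_i e^*_(i+1) = - e^*_i.  None means the result is 0.\<close>
definition step :: "nat \<Rightarrow> bool \<Rightarrow> nat \<Rightarrow> nat \<Rightarrow> nat \<Rightarrow> (nat \<times> int) option" where
  "step r e i p l =
     (if p < r then
        (if e then (if l = Suc i then Some (i, 1) else None)
              else (if l = i then Some (Suc i, 1) else None))
      else
        (if e then (if l = i then Some (Suc i, -1) else None)
              else (if l = Suc i then Some (i, -1) else None)))"

definition applies :: "nat \<Rightarrow> bool \<Rightarrow> nat \<Rightarrow> nat set \<Rightarrow> nat list \<Rightarrow> bool" where
  "applies r e i S w = (\<forall>p\<in>S. step r e i p (w ! p) \<noteq> None)"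

definition img :: "nat \<Rightarrow> bool \<Rightarrow> nat \<Rightarrow> nat set \<Rightarrow> nat list \<Rightarrow> nat list" where
  "img r e i S w =
     map (\<lambda>p. if p \<in> S then fst (the (step r e i p (w ! p))) else w ! p) [0..<length w]"

definition scal :: "nat \<Rightarrow> bool \<Rightarrow> nat \<Rightarrow> nat set \<Rightarrow> nat list \<Rightarrow> int" where
  "scal r e i S w = (\<Prod>p\<in>S. snd (the (step r e i p (w ! p))))"

text \<open>Since E_i^(a) = F_i^(a) = 0 on V and V^* for a \<ge> 2, the iterated coproduct
  \<Delta>(E_i^(k)) = \<Sum>_(a+b=k) E_i^(a) \<otimes> E_i^(b) (at q = 1, K_i acting by 1) gives a sum over
  k-element sets of tensor positions.\<close>
definition dp_coeff :: "nat \<Rightarrow> bool \<Rightarrow> nat \<Rightarrow> nat \<Rightarrow> nat list \<Rightarrow> nat list \<Rightarrow> int" where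
  "dp_coeff r e i k w w' =
     (\<Sum>S\<in>{S. S \<subseteq> {..<length w} \<and> card S = k}.
        if applies r e i S w \<and> img r e i S w = w' then scal r e i S w else 0)"

definition dp_act :: "nat \<Rightarrow> nat \<Rightarrow> nat \<Rightarrow> bool \<Rightarrow> nat \<Rightarrow> nat \<Rightarrow>
    (nat list \<Rightarrow> 'k::field) \<Rightarrow> nat list \<Rightarrow> 'k" where
  "dp_act m r s e i k v = (\<lambda>w'. \<Sum>w\<in>words m r s. v w * of_int (dp_coeff r e i k w w'))"

definition wt :: "nat \<Rightarrow> nat list \<Rightarrow> nat \<Rightarrow> int" where
  "wt r w j = int (length (filter (\<lambda>x. x = j) (take r w)))
            - int (length (filter (\<lambda>x. x = j) (drop r w)))"

text \<open>Integer binomial coefficient (\<lambda> choose t) for \<lambda> \<in> \<int>, using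
  (\<lambda> choose t) = (-1)^t ((t - \<lambda> - 1) choose t) for \<lambda> < 0.\<close>
definition int_binom :: "int \<Rightarrow> nat \<Rightarrow> int" where
  "int_binom l t = (if 0 \<le> l then int (nat l choose t)
                    else (-1) ^ t * int (nat (int t - l - 1) choose t))"

definition cartan_act :: "nat \<Rightarrow> nat \<Rightarrow> nat \<Rightarrow> (nat list \<Rightarrow> 'k::field) \<Rightarrow> nat list \<Rightarrow> 'k" where
  "cartan_act r j t v = (\<lambda>w. of_int (int_binom (wt r w j) t) * v w)"

definition tcarrier :: "'k::field itself \<Rightarrow> nat \<Rightarrow> nat \<Rightarrow> nat \<Rightarrow> (nat list \<Rightarrow> 'k) set" where
  "tcarrier _ m r s = {v. \<forall>w. w \<notin> words m r s \<longrightarrow> v w = 0}"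

definition is_submodule :: "nat \<Rightarrow> nat \<Rightarrow> nat \<Rightarrow> (nat list \<Rightarrow> 'k::field) set \<Rightarrow> bool" where
  "is_submodule m r s W \<longleftrightarrow>
     W \<subseteq> tcarrier TYPE('k) m r s \<and> (\<lambda>w. 0) \<in> W \<and>
     (\<forall>x\<in>W. \<forall>y\<in>W. (\<lambda>w. x w + y w) \<in> W) \<and>
     (\<forall>c x. x \<in> W \<longrightarrow> (\<lambda>w. c * x w) \<in> W) \<and>
     (\<forall>e i k x. Suc i < m \<longrightarrow> x \<in> W \<longrightarrow> dp_act m r s e i k x \<in> W) \<and>
     (\<forall>j t x. j < m \<longrightarrow> x \<in> W \<longrightarrow> cartan_act r j t x \<in> W)"

definition semisimple_T :: "'k::field itself \<Rightarrow> nat \<Rightarrow> nat \<Rightarrow> nat \<Rightarrow> bool" where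
  "semisimple_T _ m r s \<longleftrightarrow>
     (\<forall>W :: (nat list \<Rightarrow> 'k) set. is_submodule m r s W \<longrightarrow>
        (\<exists>W'. is_submodule m r s W' \<and> W \<inter> W' = {\<lambda>w. 0} \<and>
              (\<forall>v\<in>tcarrier TYPE('k) m r s. \<exists>a\<in>W. \<exists>b\<in>W'. v = (\<lambda>w. a w + b w))))"

end

theory Submission
  imports Defs
begin

definition sb :: "bool \<Rightarrow> bool \<Rightarrow> nat \<Rightarrow> nat \<Rightarrow> (nat \<times> int) option" where
  "sb b e i l =
     (if b then
        (if e then (if l = Suc i then Some (i, 1) else None)
              else (if l = i then Some (Suc i, 1) else None))
      else
        (if e then (if l = i then Some (Suc i, -1) else None)
              else (if l = Suc i then Some (i, -1) else None)))"

lemma step_sb: "step r e i p l = sb (p < r) e i l"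
  by (simp add: step_def sb_def)

lemma sb_ne: "sb b e i l = Some (x, c) \<Longrightarrow> x \<noteq> l"
  by (auto simp: sb_def split: if_splits)

lemma sb_range: "sb b e i l = Some (x, c) \<Longrightarrow> x = i \<or> x = Suc i"
  by (auto simp: sb_def split: if_splits)

definition loc :: "bool \<Rightarrow> nat \<Rightarrow> bool \<times> nat \<times> nat \<Rightarrow> (nat \<times> int) option" where
  "loc e i t = (case t of (b, a, a') \<Rightarrow>
     (if a = a' then Some (0, 1) else
       (case sb b e i a of None \<Rightarrow> None | Some (x, c) \<Rightarrow> if x = a' then Some (1, c) else None)))"

definition okl where "okl e i ts = (\<forall>t\<in>set ts. loc e i t \<noteq> None)"
definition cntl where "cntl e i ts = sum_list (map (\<lambda>t. fst (the (loc e i t))) ts)"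
definition prl where "prl e i ts = prod_list (map (\<lambda>t. snd (the (loc e i t))) ts)"
definition trip where "trip r w w' = map (\<lambda>p. (p < r, w ! p, w' ! p)) [0..<length w]"

lemma loc_ne: "loc e i (b, a, a') \<noteq> None \<longleftrightarrow> (a = a' \<or> (\<exists>c. sb b e i a = Some (a', c)))"
  by (auto simp: loc_def split: option.splits)

lemma okl_append[simp]: "okl e i (xs @ ys) = (okl e i xs \<and> okl e i ys)"
  by (auto simp: okl_def)
lemma cntl_append[simp]: "cntl e i (xs @ ys) = cntl e i xs + cntl e i ys"
  by (simp add: cntl_def)
lemma prl_append[simp]: "prl e i (xs @ ys) = prl e i xs * prl e i ys"
  by (simp add: prl_def)

lemma dp_coeff_len: "length w' \<noteq> length w \<Longrightarrow> dp_coeff r e i k w w' = 0"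
  unfolding dp_coeff_def img_def by (intro sum.neutral) auto

lemma dp_coeff_A:
  assumes len: "length w' = length w"
  shows "dp_coeff r e i k w w' =
     (if okl e i (trip r w w') \<and> cntl e i (trip r w w') = k then prl e i (trip r w w') else 0)"
proof -
  define n where "n = length w"
  define D where "D = {p. p < n \<and> w ! p \<noteq> w' ! p}"
  have Dsub: "D \<subseteq> {..<n}" by (auto simp: D_def)
  have ok_iff: "okl e i (trip r w w') \<longleftrightarrow>
      (\<forall>p\<in>D. \<exists>c. sb (p < r) e i (w ! p) = Some (w' ! p, c))"
  proof -
    have "okl e i (trip r w w') \<longleftrightarrow> (\<forall>p<n. loc e i (p < r, w ! p, w' ! p) \<noteq> None)"
      unfolding okl_def trip_def n_def by (auto simp del: not_None_eq)
    also have "\<dots> \<longleftrightarrow> (\<forall>p\<in>D. \<exists>c. sb (p < r) e i (w ! p) = Some (w' ! p, c))"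
      unfolding loc_ne D_def by blast
    finally show ?thesis .
  qed
  have key: "(applies r e i S w \<and> img r e i S w = w') \<longleftrightarrow> (S = D \<and> okl e i (trip r w w'))"
    if S: "S \<subseteq> {..<n}" for S
  proof
    assume h: "applies r e i S w \<and> img r e i S w = w'"
    have eq: "w' ! p = (if p \<in> S then fst (the (sb (p < r) e i (w ! p))) else w ! p)" if "p < n" for p
      using h that by (auto simp: img_def n_def step_sb)
    have ap: "sb (p < r) e i (w ! p) \<noteq> None" if "p \<in> S" for p
      using h that by (auto simp: applies_def step_sb)
    have "S = D"
    proof
      show "S \<subseteq> D"
      proof
        fix p assume p: "p \<in> S"
        then obtain x c where xc: "sb (p < r) e i (w ! p) = Some (x, c)" using ap by fastforce
        have pn: "p < n" using p S by auto
        have "w' ! p = x" using eq[OF pn] p xc by simp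
        moreover have "x \<noteq> w ! p" using sb_ne[OF xc] .
        ultimately show "p \<in> D" using pn by (auto simp: D_def)
      qed
      show "D \<subseteq> S"
      proof
        fix p assume "p \<in> D"
        then have "p < n" "w ! p \<noteq> w' ! p" by (auto simp: D_def)
        then show "p \<in> S" using eq[of p] by (auto split: if_splits)
      qed
    qed
    moreover have "okl e i (trip r w w')"
      unfolding ok_iff
    proof
      fix p assume "p \<in> D"
      with \<open>S = D\<close> have p: "p \<in> S" "p < n" by (auto simp: D_def)
      then obtain x c where "sb (p < r) e i (w ! p) = Some (x, c)" using ap by fastforce
      with eq[of p] p show "\<exists>c. sb (p < r) e i (w ! p) = Some (w' ! p, c)" by auto
    qed
    ultimately show "S = D \<and> okl e i (trip r w w')" by blast
  next
    assume h: "S = D \<and> okl e i (trip r w w')"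
    then have h2: "\<forall>p\<in>D. \<exists>c. sb (p < r) e i (w ! p) = Some (w' ! p, c)" using ok_iff by blast
    have "applies r e i S w" using h h2 by (auto simp: applies_def step_sb)
    moreover have "img r e i S w = w'"
      unfolding img_def
    proof (rule nth_equalityI)
      show "length (map (\<lambda>p. if p \<in> S then fst (the (step r e i p (w ! p))) else w ! p) [0..<length w]) = length w'"
        using len by simp
      fix p assume "p < length (map (\<lambda>p. if p \<in> S then fst (the (step r e i p (w ! p))) else w ! p) [0..<length w])"
      then have p: "p < n" by (simp add: n_def)
      show "map (\<lambda>p. if p \<in> S then fst (the (step r e i p (w ! p))) else w ! p) [0..<length w] ! p = w' ! p"
        using p h h2 by (auto simp: step_sb n_def D_def)
    qed
    ultimately show "applies r e i S w \<and> img r e i S w = w'" by blast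
  qed
  have "dp_coeff r e i k w w' = (\<Sum>S\<in>{S. S \<subseteq> {..<n} \<and> card S = k}.
        if S = D then (if okl e i (trip r w w') then scal r e i D w else 0) else 0)"
    unfolding dp_coeff_def n_def[symmetric]
    by (intro sum.cong refl) (use key in auto)
  also have "\<dots> = (if card D = k \<and> okl e i (trip r w w') then scal r e i D w else 0)"
  proof -
    have fin: "finite {S. S \<subseteq> {..<n} \<and> card S = k}"
      by (rule finite_subset[of _ "Pow {..<n}"]) auto
    show ?thesis using Dsub by (simp add: sum.delta'[OF fin])
  qed
  also have "\<dots> = (if okl e i (trip r w w') \<and> cntl e i (trip r w w') = k then prl e i (trip r w w') else 0)"
  proof (cases "okl e i (trip r w w')")
    case True
    then have h2: "\<forall>p\<in>D. \<exists>c. sb (p < r) e i (w ! p) = Some (w' ! p, c)" using ok_iff by blast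
    have "cntl e i (trip r w w') = (\<Sum>p\<in>{0..<n}. fst (the (loc e i (p < r, w ! p, w' ! p))))"
      by (simp add: cntl_def trip_def n_def sum.distinct_set_conv_list[symmetric] o_def)
    also have "\<dots> = (\<Sum>p\<in>{0..<n}. if p \<in> D then 1 else 0)"
      by (intro sum.cong refl) (use h2 in \<open>auto simp: loc_def D_def split: option.splits\<close>)
    also have "\<dots> = card D" using Dsub by (simp add: sum.If_cases Int_absorb1 lessThan_atLeast0)
    finally have c: "card D = cntl e i (trip r w w')" by simp
    have "prl e i (trip r w w') = (\<Prod>p\<in>{0..<n}. snd (the (loc e i (p < r, w ! p, w' ! p))))"
      by (simp add: prl_def trip_def n_def prod.distinct_set_conv_list[symmetric] o_def)
    also have "\<dots> = (\<Prod>p\<in>{0..<n}. if p \<in> D then snd (the (step r e i p (w ! p))) else 1)"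
      by (intro prod.cong refl) (use h2 in \<open>auto simp: loc_def D_def step_sb split: option.splits\<close>)
    also have "\<dots> = scal r e i D w" using Dsub
      by (simp add: prod.If_cases Int_absorb1 lessThan_atLeast0 scal_def)
    finally show ?thesis using c True by auto
  qed auto
  finally show ?thesis .
qed


definition ext :: "nat \<Rightarrow> nat \<Rightarrow> nat list \<Rightarrow> nat list" where
  "ext r j w = take r w @ [j, j] @ drop r w"
definition del :: "nat \<Rightarrow> nat list \<Rightarrow> nat list" where
  "del r u = take r u @ drop (Suc (Suc r)) u"

lemma trip_zip: "length w' = length w \<Longrightarrow>
   trip r w w' = zip (map (\<lambda>p. p < r) [0..<length w]) (zip w w')"
  by (rule nth_equalityI) (auto simp: trip_def)

lemma flags: "map (\<lambda>p. p < r) [0..<r + s] = replicate r True @ replicate s False"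
  by (rule nth_equalityI) (auto simp: nth_append)

lemma M_lemma:
  assumes "Suc i < m"
  shows "(\<Sum>j<m. if okl e i [(True, j, a), (False, j, b)] \<and> cntl e i [(True, j, a), (False, j, b)] + N = k
          then prl e i [(True, j, a), (False, j, b)] else 0)
       = (if a = b \<and> a < m \<and> N = k then 1 else 0)"
proof -
  define P where "P = (if e then a = i \<and> b = Suc i else a = Suc i \<and> b = i)"
  have q: "(if okl e i [(True, j, a), (False, j, b)] \<and> cntl e i [(True, j, a), (False, j, b)] + N = k
          then prl e i [(True, j, a), (False, j, b)] else 0) =
       (if a = b then (if j = a \<and> N = k then 1 else 0)
        else if P \<and> Suc N = k then (if j = (if e then Suc i else i) then 1 else 0) - (if j = (if e then i else Suc i) then 1 else 0) else 0)"
    for j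
    unfolding P_def okl_def cntl_def prl_def
    by (cases e; cases "j = a"; cases "j = b"; cases "a = b"; simp add: loc_def sb_def; auto)
  show ?thesis
  proof (cases "a = b")
    case True
    then show ?thesis unfolding q by (cases "N = k") (simp_all add: sum.delta)
  next
    case False
    have "i < m" using assms by simp
    then show ?thesis using False assms unfolding q
      by (cases "P \<and> Suc N = k"; cases e) (auto simp add: sum_subtractf sum.delta)
  qed
qed

lemma u_split: "length u \<ge> Suc (Suc r) \<Longrightarrow> u = take r u @ [u ! r, u ! Suc r] @ drop (Suc (Suc r)) u"
proof -
  assume h: "length u \<ge> Suc (Suc r)"
  have "drop r u = u ! r # drop (Suc r) u" using h by (simp add: Cons_nth_drop_Suc)
  also have "drop (Suc r) u = u ! Suc r # drop (Suc (Suc r)) u" using h by (simp add: Cons_nth_drop_Suc)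
  finally have "drop r u = [u ! r, u ! Suc r] @ drop (Suc (Suc r)) u" by simp
  then show ?thesis by (metis append_take_drop_id)
qed

lemma trip_ext:
  assumes "length w = r + s" "length u = r + s + 2"
  shows "trip (Suc r) (ext r j w) u =
     zip (replicate r True) (zip (take r w) (take r u)) @ [(True, j, u ! r), (False, j, u ! Suc r)]
     @ zip (replicate s False) (zip (drop r w) (drop (Suc (Suc r)) u))"
proof -
  have l: "length (ext r j w) = Suc r + Suc s" using assms by (simp add: ext_def)
  have fl: "map (\<lambda>p. p < Suc r) [0..<length (ext r j w)] = replicate (Suc r) True @ replicate (Suc s) False"
    by (simp only: l flags)
  have "trip (Suc r) (ext r j w) u = zip (replicate (Suc r) True @ replicate (Suc s) False) (zip (ext r j w) u)"
  proof -
    have "length u = length (ext r j w)" using assms l by simp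
    then show ?thesis by (simp only: trip_zip fl)
  qed
  also have "replicate (Suc r) True @ replicate (Suc s) False = replicate r True @ [True, False] @ replicate s False"
    by (simp add: replicate_append_same[symmetric])
  also have "zip (ext r j w) u = zip (take r w @ [j, j] @ drop r w) (take r u @ [u ! r, u ! Suc r] @ drop (Suc (Suc r)) u)"
    using u_split[of r u] assms by (simp add: ext_def)
  also have "\<dots> = zip (take r w) (take r u) @ [(j, u ! r), (j, u ! Suc r)] @ zip (drop r w) (drop (Suc (Suc r)) u)"
    using assms by (simp add: zip_append)
  finally show ?thesis using assms by (simp add: zip_append)
qed

lemma trip_del:
  assumes "length w = r + s" "length u = r + s + 2"
  shows "trip r w (del r u) =
     zip (replicate r True) (zip (take r w) (take r u))
     @ zip (replicate s False) (zip (drop r w) (drop (Suc (Suc r)) u))"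
proof -
  have fl: "map (\<lambda>p. p < r) [0..<length w] = replicate r True @ replicate s False"
    by (simp only: assms flags)
  have "trip r w (del r u) = zip (replicate r True @ replicate s False) (zip w (del r u))"
  proof -
    have "length (del r u) = length w" using assms by (simp add: del_def)
    then show ?thesis by (simp only: trip_zip fl)
  qed
  also have "zip w (del r u) = zip (take r w @ drop r w) (take r u @ drop (Suc (Suc r)) u)"
    by (simp add: del_def)
  also have "\<dots> = zip (take r w) (take r u) @ zip (drop r w) (drop (Suc (Suc r)) u)"
    by (rule zip_append) (simp add: assms)
  finally show ?thesis using assms by (simp add: zip_append)
qed

lemma key:
  assumes "length w = r + s" "Suc i < m"
  shows "(\<Sum>j<m. dp_coeff (Suc r) e i k (ext r j w) u) =
     (if length u = r + s + 2 \<and> u ! r = u ! Suc r \<and> u ! r < m then dp_coeff r e i k w (del r u) else 0)"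
proof (cases "length u = r + s + 2")
  case False
  then show ?thesis using assms by (simp add: dp_coeff_len ext_def)
next
  case len: True
  define A where "A = zip (replicate r True) (zip (take r w) (take r u))"
  define B where "B = zip (replicate s False) (zip (drop r w) (drop (Suc (Suc r)) u))"
  define M where "M = (\<lambda>j::nat. [(True, j, u ! r), (False, j, u ! Suc r)])"
  have "(\<Sum>j<m. dp_coeff (Suc r) e i k (ext r j w) u) =
     (\<Sum>j<m. (if okl e i (M j) \<and> cntl e i (M j) + (cntl e i A + cntl e i B) = k then prl e i (M j) else 0)
        * (if okl e i A \<and> okl e i B then prl e i A * prl e i B else 0))"
  proof (intro sum.cong refl)
    fix j
    have "dp_coeff (Suc r) e i k (ext r j w) u =
      (if okl e i (A @ M j @ B) \<and> cntl e i (A @ M j @ B) = k then prl e i (A @ M j @ B) else 0)"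
      using dp_coeff_A[of u "ext r j w"] trip_ext[OF assms(1) len, of j] assms len
      by (simp add: ext_def A_def B_def M_def)
    then show "dp_coeff (Suc r) e i k (ext r j w) u = (if okl e i (M j) \<and> cntl e i (M j) + (cntl e i A + cntl e i B) = k then prl e i (M j) else 0)
        * (if okl e i A \<and> okl e i B then prl e i A * prl e i B else 0)"
      by (auto simp: algebra_simps)
  qed
  also have "\<dots> = (if u ! r = u ! Suc r \<and> u ! r < m \<and> cntl e i A + cntl e i B = k then 1 else 0)
       * (if okl e i A \<and> okl e i B then prl e i A * prl e i B else 0)"
    unfolding sum_distrib_right[symmetric] M_def by (simp only: M_lemma[OF assms(2)])
  also have "\<dots> = (if u ! r = u ! Suc r \<and> u ! r < m then dp_coeff r e i k w (del r u) else 0)"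
    using dp_coeff_A[of "del r u" w r e i k] trip_del[OF assms(1) len] assms len
    by (auto simp: del_def A_def B_def)
  finally show ?thesis using len by simp
qed


definition phi :: "nat \<Rightarrow> nat \<Rightarrow> nat \<Rightarrow> (nat list \<Rightarrow> 'k::field) \<Rightarrow> nat list \<Rightarrow> 'k" where
  "phi m r s v u = (if length u = r + s + 2 \<and> u ! r = u ! Suc r \<and> u ! r < m then v (del r u) else 0)"

lemma ext_len: "length w \<ge> r \<Longrightarrow> length (ext r j w) = length w + 2"
  by (simp add: ext_def)
lemma ext_nth: "length w \<ge> r \<Longrightarrow> ext r j w ! r = j \<and> ext r j w ! Suc r = j"
  by (simp add: ext_def nth_append)
lemma del_ext: "length w \<ge> r \<Longrightarrow> del r (ext r j w) = w"
  by (simp add: ext_def del_def)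
lemma ext_del: "length u \<ge> Suc (Suc r) \<Longrightarrow> u ! r = u ! Suc r \<Longrightarrow> ext r (u ! r) (del r u) = u"
  using u_split[of r u] by (simp add: ext_def del_def min_def)
lemma set_ext: "set (ext r j w) = insert j (set w)"
  by (auto simp: ext_def) (metis append_take_drop_id Un_iff set_append)+
lemma set_del: "set (del r u) \<subseteq> set u"
  by (auto simp: del_def dest: in_set_takeD in_set_dropD)
lemma len_del: "length u \<ge> Suc (Suc r) \<Longrightarrow> length (del r u) = length u - 2"
  by (simp add: del_def)

lemma finite_words: "finite (words m r s)"
proof -
  have "words m r s \<subseteq> {w. set w \<subseteq> {..<m} \<and> length w = r + s}" by (auto simp: words_def)
  moreover have "finite {w. set w \<subseteq> {..<m} \<and> length w = r + s}"
    by (rule finite_lists_length_eq) simp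
  ultimately show ?thesis by (rule finite_subset)
qed

lemma ext_words: "w \<in> words m r s \<Longrightarrow> j < m \<Longrightarrow> ext r j w \<in> words m (r + 1) (s + 1)"
  by (auto simp: words_def ext_len set_ext)

lemma phi_tc:
  assumes "v \<in> tcarrier TYPE('k::field) m r s"
  shows "phi m r s v \<in> tcarrier TYPE('k) m (r + 1) (s + 1)"
  unfolding tcarrier_def mem_Collect_eq
proof (intro allI impI)
  fix u assume u: "u \<notin> words m (r + 1) (s + 1)"
  show "phi m r s v u = 0"
  proof (cases "length u = r + s + 2 \<and> u ! r = u ! Suc r \<and> u ! r < m")
    case True
    have "del r u \<notin> words m r s"
    proof
      assume "del r u \<in> words m r s"
      then have "ext r (u ! r) (del r u) \<in> words m (r + 1) (s + 1)" using True ext_words by blast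
      then show False using u True ext_del[of r u] by simp
    qed
    then show ?thesis using assms True by (simp add: phi_def tcarrier_def)
  qed (auto simp: phi_def)
qed

lemma phi_ext: "length w = r + s \<Longrightarrow> j < m \<Longrightarrow> phi m r s v (ext r j w) = v w"
  by (simp add: phi_def ext_len ext_nth del_ext)

lemma phi_inj:
  assumes "m > 0" "x \<in> tcarrier TYPE('k::field) m r s" "y \<in> tcarrier TYPE('k) m r s"
    and "phi m r s x = phi m r s y"
  shows "x = y"
proof
  fix w
  show "x w = y w"
  proof (cases "w \<in> words m r s")
    case True
    then have "length w = r + s" by (simp add: words_def)
    then show ?thesis using phi_ext[of w r s 0 m] assms by metis
  next
    case False
    then show ?thesis using assms by (simp add: tcarrier_def)
  qed
qed

lemma wt_del:
  assumes "length u \<ge> Suc (Suc r)" "u ! r = u ! Suc r"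
  shows "wt (Suc r) u j = wt r (del r u) j"
proof -
  have u: "u = take r u @ [u ! r, u ! Suc r] @ drop (Suc (Suc r)) u" using u_split assms by blast
  have lt: "length (take r u) = r" using assms by simp
  have mn: "min (length u) r = r" using assms by simp
  have t1: "take (Suc r) u = take r u @ [u ! r]"
    by (subst u) (simp add: lt mn)
  have d1: "drop (Suc r) u = [u ! Suc r] @ drop (Suc (Suc r)) u"
    by (subst u) (simp add: lt mn)
  have t2: "take r (del r u) = take r u" using lt by (simp add: del_def)
  have d2: "drop r (del r u) = drop (Suc (Suc r)) u" using lt by (simp add: del_def)
  show ?thesis unfolding wt_def t1 d1 t2 d2 using assms(2) by simp
qed

lemma phi_cartan:
  "phi m r s (cartan_act r j t v) = cartan_act (r + 1) j t (phi m r s v)"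
  by (rule ext) (auto simp: phi_def cartan_act_def wt_del)


lemma dp_coeff_words:
  assumes "w \<in> words m r s" "w' \<notin> words m r s" "Suc i < m"
  shows "dp_coeff r e i k w w' = 0"
proof (cases "length w' = length w")
  case False then show ?thesis by (simp add: dp_coeff_len)
next
  case len: True
  show ?thesis
  proof (rule ccontr)
    assume "dp_coeff r e i k w w' \<noteq> 0"
    then have ok: "okl e i (trip r w w')" using dp_coeff_A[OF len] by (auto split: if_splits)
    have "set w' \<subseteq> {..<m}"
    proof
      fix x assume "x \<in> set w'"
      then obtain p where p: "p < length w'" "w' ! p = x" by (auto simp: in_set_conv_nth)
      have "(p < r, w ! p, w' ! p) \<in> set (trip r w w')" using p len by (auto simp: trip_def)
      then have "loc e i (p < r, w ! p, w' ! p) \<noteq> None" using ok by (simp add: okl_def del: not_None_eq)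
      then have "w ! p = w' ! p \<or> (\<exists>c. sb (p < r) e i (w ! p) = Some (w' ! p, c))" by (simp only: loc_ne)
      moreover have "w ! p \<in> set w" using p len by simp
      ultimately show "x \<in> {..<m}" using assms(1,3) p sb_range by (auto simp: words_def) (metis lessThan_iff subsetD Suc_lessD less_SucI)+
    qed
    then have "w' \<in> words m r s" using len assms(1) by (simp add: words_def)
    then show False using assms(2) by simp
  qed
qed

lemma dp_tc: "Suc i < m \<Longrightarrow> dp_act m r s e i k v \<in> tcarrier TYPE('k::field) m r s"
  unfolding tcarrier_def dp_act_def by (auto intro!: sum.neutral simp: dp_coeff_words)

lemma cartan_tc: "v \<in> tcarrier TYPE('k::field) m r s \<Longrightarrow> cartan_act r j t v \<in> tcarrier TYPE('k) m r s"
  unfolding tcarrier_def cartan_act_def by auto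

lemma phi_dp:
  assumes "Suc i < m" "v \<in> tcarrier TYPE('k::field) m r s"
  shows "phi m r s (dp_act m r s e i k v) = dp_act m (r + 1) (s + 1) e i k (phi m r s v)"
proof (rule ext)
  fix u'
  define F where "F = (\<lambda>u. phi m r s v u * (of_int (dp_coeff (r + 1) e i k u u') :: 'k))"
  define g where "g = (\<lambda>p. ext r (fst p) (snd p))"
  define X where "X = {..<m} \<times> words m r s"
  have inj: "inj_on g X"
  proof (rule inj_onI)
    fix p q assume "p \<in> X" "q \<in> X" "g p = g q"
    then have lp: "length (snd p) = r + s" "length (snd q) = r + s" by (auto simp: X_def words_def)
    have "fst p = fst q" using \<open>g p = g q\<close> ext_nth[of r "snd p" "fst p"] ext_nth[of r "snd q" "fst q"] lp
      by (simp add: g_def)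
    moreover have "snd p = snd q" using \<open>g p = g q\<close> del_ext[of r "snd p" "fst p"] del_ext[of r "snd q" "fst q"] lp
      by (simp add: g_def)
    ultimately show "p = q" by (simp add: prod_eq_iff)
  qed
  have sub: "g ` X \<subseteq> words m (r + 1) (s + 1)" using ext_words by (auto simp: g_def X_def)
  have zero: "\<forall>u\<in>words m (r + 1) (s + 1) - g ` X. F u = 0"
  proof
    fix u assume u: "u \<in> words m (r + 1) (s + 1) - g ` X"
    have "phi m r s v u = 0"
    proof (cases "length u = r + s + 2 \<and> u ! r = u ! Suc r \<and> u ! r < m")
      case True
      have "del r u \<notin> words m r s"
      proof
        assume "del r u \<in> words m r s"
        then have "g (u ! r, del r u) \<in> g ` X" using True by (auto simp: X_def)
        then show False using u True ext_del[of r u] by (simp add: g_def)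
      qed
      then show ?thesis using assms True by (simp add: phi_def tcarrier_def)
    qed (auto simp: phi_def)
    then show "F u = 0" by (simp add: F_def)
  qed
  have "dp_act m (r + 1) (s + 1) e i k (phi m r s v) u' = (\<Sum>u\<in>words m (r + 1) (s + 1). F u)"
    by (simp add: dp_act_def F_def)
  also have "\<dots> = (\<Sum>u\<in>g ` X. F u)"
    using sum.mono_neutral_right[OF finite_words sub zero] by simp
  also have "\<dots> = (\<Sum>p\<in>X. F (g p))" by (rule sum.reindex[OF inj, unfolded o_def])
  also have "\<dots> = (\<Sum>j<m. \<Sum>w\<in>words m r s. F (ext r j w))"
    unfolding X_def g_def by (simp add: sum.cartesian_product case_prod_beta)
  also have "\<dots> = (\<Sum>w\<in>words m r s. \<Sum>j<m. F (ext r j w))" by (rule sum.swap)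
  also have "\<dots> = (\<Sum>w\<in>words m r s. v w * of_int (\<Sum>j<m. dp_coeff (Suc r) e i k (ext r j w) u'))"
  proof (intro sum.cong refl)
    fix w assume "w \<in> words m r s"
    then have lw: "length w = r + s" by (simp add: words_def)
    show "(\<Sum>j<m. F (ext r j w)) = v w * of_int (\<Sum>j<m. dp_coeff (Suc r) e i k (ext r j w) u')"
      by (simp add: F_def phi_ext[OF lw] sum_distrib_left)
  qed
  also have "\<dots> = (if length u' = r + s + 2 \<and> u' ! r = u' ! Suc r \<and> u' ! r < m
        then (\<Sum>w\<in>words m r s. v w * of_int (dp_coeff r e i k w (del r u'))) else 0)"
  proof (cases "length u' = r + s + 2 \<and> u' ! r = u' ! Suc r \<and> u' ! r < m")
    case True
    have k: "(\<Sum>j<m. dp_coeff (Suc r) e i k (ext r j w) u') = dp_coeff r e i k w (del r u')"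
      if "w \<in> words m r s" for w
      using key[OF _ assms(1)] that True by (simp add: words_def)
    show ?thesis by (subst if_P[OF True]) (intro sum.cong refl, simp add: k)
  next
    case False
    have k: "(\<Sum>j<m. dp_coeff (Suc r) e i k (ext r j w) u') = 0"
      if "w \<in> words m r s" for w
      using key[OF _ assms(1)] that False by (auto simp: words_def)
    show ?thesis by (subst if_not_P[OF False]) (intro sum.neutral ballI, simp add: k)
  qed
  also have "\<dots> = phi m r s (dp_act m r s e i k v) u'"
    by (simp add: phi_def dp_act_def)
  finally show "phi m r s (dp_act m r s e i k v) u' = dp_act m (r + 1) (s + 1) e i k (phi m r s v) u'" ..
qed


lemma phi_add: "phi m r s (\<lambda>w. x w + y w) = (\<lambda>u. phi m r s x u + phi m r s y u)"
  by (rule ext) (simp add: phi_def)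
lemma phi_diff: "phi m r s (\<lambda>w. x w - y w) = (\<lambda>u. phi m r s x u - phi m r s y u)"
  by (rule ext) (simp add: phi_def)
lemma phi_scal: "phi m r s (\<lambda>w. c * x w) = (\<lambda>u. c * phi m r s x u)"
  by (rule ext) (simp add: phi_def)
lemma phi_zero: "phi m r s (\<lambda>w. 0::'k::field) = (\<lambda>u. 0)"
  by (rule ext) (simp add: phi_def)

theorem proposition6p2:
  fixes m r s :: nat
  assumes "m > 0"
    and "\<not> semisimple_T TYPE('k::field) m r s"
  shows "\<not> semisimple_T TYPE('k) m (r + 1) (s + 1)"
proof
  assume ss: "semisimple_T TYPE('k) m (r + 1) (s + 1)"
  from assms(2) obtain W :: "(nat list \<Rightarrow> 'k) set" where
    W: "is_submodule m r s W" and nc: "\<not> (\<exists>W'. is_submodule m r s W' \<and> W \<inter> W' = {\<lambda>w. 0} \<and>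
              (\<forall>v\<in>tcarrier TYPE('k) m r s. \<exists>a\<in>W. \<exists>b\<in>W'. v = (\<lambda>w. a w + b w)))"
    using assms(2) unfolding semisimple_T_def not_all not_imp by (elim exE conjE)
  let ?T = "tcarrier TYPE('k) m r s"
  let ?T2 = "tcarrier TYPE('k) m (r + 1) (s + 1)"
  let ?p = "phi m r s :: (nat list \<Rightarrow> 'k) \<Rightarrow> _"
  have WT: "W \<subseteq> ?T" using W by (simp add: is_submodule_def)
  define W2 where "W2 = ?p ` W"
  have W2: "is_submodule m (r + 1) (s + 1) W2"
    unfolding is_submodule_def
  proof (intro conjI allI impI ballI)
    show "W2 \<subseteq> ?T2" using WT phi_tc unfolding W2_def by blast
    have "(\<lambda>w. 0) \<in> W" using W by (simp add: is_submodule_def)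
    then have "?p (\<lambda>w. 0) \<in> W2" unfolding W2_def by (rule imageI)
    then show "(\<lambda>w. 0) \<in> W2" by (simp only: phi_zero)
  next
    fix x y assume "x \<in> W2" "y \<in> W2"
    then obtain x' y' where h: "x' \<in> W" "y' \<in> W" "x = ?p x'" "y = ?p y'" unfolding W2_def by blast
    have "(\<lambda>w. x' w + y' w) \<in> W" using W h by (simp add: is_submodule_def)
    then have "?p (\<lambda>w. x' w + y' w) \<in> W2" unfolding W2_def by (rule imageI)
    then show "(\<lambda>w. x w + y w) \<in> W2" by (simp only: phi_add h)
  next
    fix c x assume "x \<in> W2"
    then obtain x' where h: "x' \<in> W" "x = ?p x'" unfolding W2_def by blast
    have "(\<lambda>w. c * x' w) \<in> W" using W h by (simp add: is_submodule_def)
    then have "?p (\<lambda>w. c * x' w) \<in> W2" unfolding W2_def by (rule imageI)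
    then show "(\<lambda>w. c * x w) \<in> W2" by (simp only: phi_scal h)
  next
    fix e i k x assume i: "Suc i < m" and "x \<in> W2"
    then obtain y where h: "y \<in> W" "x = ?p y" unfolding W2_def by blast
    have "dp_act m r s e i k y \<in> W" using W h i by (simp add: is_submodule_def)
    then have "?p (dp_act m r s e i k y) \<in> W2" unfolding W2_def by (rule imageI)
    moreover have "y \<in> ?T" using WT h by blast
    ultimately show "dp_act m (r + 1) (s + 1) e i k x \<in> W2" by (simp only: phi_dp[OF i] h)
  next
    fix j t x assume j: "j < m" and "x \<in> W2"
    then obtain y where h: "y \<in> W" "x = ?p y" unfolding W2_def by blast
    have "cartan_act r j t y \<in> W" using W h j by (simp add: is_submodule_def)
    then have "?p (cartan_act r j t y) \<in> W2" unfolding W2_def by (rule imageI)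
    then show "cartan_act (r + 1) j t x \<in> W2" by (simp only: phi_cartan h)
  qed
  have "\<exists>W'. is_submodule m (r + 1) (s + 1) W' \<and> W2 \<inter> W' = {\<lambda>w. 0} \<and>
      (\<forall>v\<in>?T2. \<exists>a\<in>W2. \<exists>b\<in>W'. v = (\<lambda>w. a w + b w))"
    using ss W2 unfolding semisimple_T_def by (elim allE impE)
  then obtain W' where W': "is_submodule m (r + 1) (s + 1) W'" and int: "W2 \<inter> W' = {\<lambda>w. 0}"
    and span: "\<forall>v\<in>?T2. \<exists>a\<in>W2. \<exists>b\<in>W'. v = (\<lambda>w. a w + b w)"
    by (elim exE conjE)
  define C where "C = {x \<in> ?T. ?p x \<in> W'}"
  have W'T: "W' \<subseteq> ?T2" using W' by (simp add: is_submodule_def)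
  have C: "is_submodule m r s C"
    unfolding is_submodule_def
  proof (intro conjI allI impI ballI)
    show "C \<subseteq> ?T" by (auto simp: C_def)
    have "?p (\<lambda>w. 0) \<in> W'" using W' by (simp only: phi_zero) (simp add: is_submodule_def)
    moreover have "(\<lambda>w. 0) \<in> ?T" by (simp add: tcarrier_def)
    ultimately show "(\<lambda>w. 0) \<in> C" by (simp add: C_def)
  next
    fix x y assume "x \<in> C" "y \<in> C"
    then have h: "x \<in> ?T" "y \<in> ?T" "?p x \<in> W'" "?p y \<in> W'" by (auto simp: C_def)
    have "?p (\<lambda>w. x w + y w) \<in> W'" using W' h by (simp only: phi_add) (simp add: is_submodule_def)
    moreover have "(\<lambda>w. x w + y w) \<in> ?T" using h by (simp add: tcarrier_def)
    ultimately show "(\<lambda>w. x w + y w) \<in> C" by (simp add: C_def)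
  next
    fix c x assume "x \<in> C"
    then have h: "x \<in> ?T" "?p x \<in> W'" by (auto simp: C_def)
    have "?p (\<lambda>w. c * x w) \<in> W'" using W' h by (simp only: phi_scal) (simp add: is_submodule_def)
    moreover have "(\<lambda>w. c * x w) \<in> ?T" using h by (simp add: tcarrier_def)
    ultimately show "(\<lambda>w. c * x w) \<in> C" by (simp add: C_def)
  next
    fix e i k x assume i: "Suc i < m" and "x \<in> C"
    then have h: "x \<in> ?T" "?p x \<in> W'" by (auto simp: C_def)
    have "dp_act m (r + 1) (s + 1) e i k (?p x) \<in> W'" using W' h i by (simp add: is_submodule_def)
    then have "?p (dp_act m r s e i k x) \<in> W'" by (simp only: phi_dp[OF i h(1)])
    moreover have "dp_act m r s e i k x \<in> ?T" by (rule dp_tc[OF i])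
    ultimately show "dp_act m r s e i k x \<in> C" by (simp add: C_def)
  next
    fix j t x assume j: "j < m" and "x \<in> C"
    then have h: "x \<in> ?T" "?p x \<in> W'" by (auto simp: C_def)
    have "cartan_act (r + 1) j t (?p x) \<in> W'" using W' h j by (simp add: is_submodule_def)
    then have "?p (cartan_act r j t x) \<in> W'" by (simp only: phi_cartan)
    moreover have "cartan_act r j t x \<in> ?T" by (rule cartan_tc[OF h(1)])
    ultimately show "cartan_act r j t x \<in> C" by (simp add: C_def)
  qed
  have "W \<inter> C = {\<lambda>w. 0}"
  proof
    show "{\<lambda>w. 0} \<subseteq> W \<inter> C" using W C by (simp add: is_submodule_def)
    show "W \<inter> C \<subseteq> {\<lambda>w. 0}"
    proof
      fix x assume x: "x \<in> W \<inter> C"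
      then have "?p x \<in> W2 \<inter> W'" by (auto simp: W2_def C_def)
      then have "?p x = (\<lambda>w. 0)" using int by blast
      moreover have "?p (\<lambda>w. 0) = (\<lambda>w. 0)" by (rule phi_zero)
      ultimately have "?p x = ?p (\<lambda>w. 0)" by simp
      moreover have "(\<lambda>w. 0) \<in> ?T" by (simp add: tcarrier_def)
      ultimately have "x = (\<lambda>w. 0)" using phi_inj[OF assms(1)] x by (auto simp: C_def)
      then show "x \<in> {\<lambda>w. 0}" by simp
    qed
  qed
  moreover have "\<forall>v\<in>?T. \<exists>a\<in>W. \<exists>b\<in>C. v = (\<lambda>w. a w + b w)"
  proof
    fix v assume v: "v \<in> ?T"
    then have "?p v \<in> ?T2" by (rule phi_tc)
    then obtain a b where a: "a \<in> W2" and b: "b \<in> W'" and ab: "?p v = (\<lambda>w. a w + b w)" using span by blast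
    from a obtain x where x: "x \<in> W" "a = ?p x" unfolding W2_def by blast
    define y where "y = (\<lambda>w. v w - x w)"
    have yT: "y \<in> ?T" using v x WT by (auto simp: y_def tcarrier_def)
    have "?p y = b" unfolding y_def phi_diff using ab x by (auto simp: fun_eq_iff)
    then have "y \<in> C" using yT b by (simp add: C_def)
    moreover have "v = (\<lambda>w. x w + y w)" by (simp add: y_def)
    ultimately show "\<exists>a\<in>W. \<exists>b\<in>C. v = (\<lambda>w. a w + b w)" using x by blast
  qed
  ultimately have "\<exists>W'. is_submodule m r s W' \<and> W \<inter> W' = {\<lambda>w. 0} \<and>
              (\<forall>v\<in>tcarrier TYPE('k) m r s. \<exists>a\<in>W. \<exists>b\<in>W'. v = (\<lambda>w. a w + b w))"
    using C by (intro exI[of _ C] conjI)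
  with nc show False by (rule notE)
qed

end
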